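(* Let $K$ be a field, let $\mathcal R\subset\mathbb Z^k$ be a polyhedral region, and let $f$ be a hypergeometric term on $\mathcal R$. Then the function $g\colon\mathbb Z^k\to K$ defined by $g(\vec z)=f(\vec z)$ for $\vec z\in\mathcal R$ and $g(\vec z)=0$ for $\vec z\notin\mathcal R$ is a hypergeometric term on $\mathbb Z^k$.
   Context: A half-space is $\{\vec z\in\mathbb Z^k:\vec v\cdot\vec z>n\}$ with $\vec v\in\mathbb Z^k$, $n\in\mathbb Z$; a polyhedral region is $\mathbb Z^k$ or an intersection of finitely many half-spaces. A hypergeometric term on a polyhedral region $\mathcal R$ over $K$ is a function $f\colon\mathcal R\to K$ such that for each $i\in\{1,\dots,k\}$ there are nonzero polynomials $A_i,B_i\in K[z_1,\dots,z_k]$ with $A_i(\vec z)f(\vec z)=B_i(\vec z)f(\vec z+\vec e_i)$ for all $\vec z$ with $\vec z\in\mathcal R$ and $\vec z+\vec e_i\in\mathcal R$. A hypergeometric term on $\mathbb Z^k$ is the case $\mathcal R=\mathbb Z^k$. *)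

theory Defs
  imports "HOL-Analysis.Finite_Cartesian_Product" "HOL-Library.Poly_Mapping"
begin

text \<open>Polynomials in the variables z_i (i :: 'k) over a field are finitely supported maps
  from monomials (exponent vectors 'k \<Rightarrow> nat) to coefficients.\<close>

type_synonym ('a, 'k) mpoly = "('k \<Rightarrow> nat) \<Rightarrow>\<^sub>0 'a"

definition mpoly_eval :: "('a::field, 'k::finite) mpoly \<Rightarrow> int ^ 'k \<Rightarrow> 'a" where
  "mpoly_eval p z = (\<Sum>m\<in>Poly_Mapping.keys p. Poly_Mapping.lookup p m * (\<Prod>i\<in>UNIV. of_int (z $ i) ^ m i))"

definition half_space :: "int ^ 'k::finite \<Rightarrow> int \<Rightarrow> (int ^ 'k) set" where
  "half_space v n = {z. (\<Sum>i\<in>UNIV. v $ i * z $ i) > n}"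

definition polyhedral_region :: "(int ^ 'k::finite) set \<Rightarrow> bool" where
  "polyhedral_region R \<longleftrightarrow>
     R = UNIV \<or> (\<exists>H. finite H \<and> R = (\<Inter>(v, n)\<in>H. half_space v n))"

definition hypergeometric_on :: "(int ^ 'k::finite) set \<Rightarrow> (int ^ 'k \<Rightarrow> 'a::field) \<Rightarrow> bool" where
  "hypergeometric_on R f \<longleftrightarrow>
     (\<forall>i. \<exists>A B :: ('a, 'k) mpoly. A \<noteq> 0 \<and> B \<noteq> 0 \<and>
        (\<forall>z. z \<in> R \<and> z + axis i 1 \<in> R \<longrightarrow>
              mpoly_eval A z * f z = mpoly_eval B z * f (z + axis i 1)))"

end

theory Submission
  imports Defs "HOL-Library.Function_Algebras"
begin

definition mon :: "int ^ 'k::finite \<Rightarrow> ('k \<Rightarrow> nat) \<Rightarrow> 'a::field" where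
  "mon z m = (\<Prod>i\<in>UNIV. of_int (z $ i) ^ m i)"

lemma mon_add: "mon z (a + b) = mon z a * mon z b"
  by (simp add: mon_def power_add prod.distrib)

lemma eval_superset:
  assumes "finite S" "Poly_Mapping.keys p \<subseteq> S"
  shows "mpoly_eval p z = (\<Sum>m\<in>S. Poly_Mapping.lookup p m * mon z m)"
  unfolding mpoly_eval_def mon_def
  by (rule sum.mono_neutral_left) (use assms in \<open>auto simp: in_keys_iff\<close>)

lemma eval_add: "mpoly_eval (p + q) z = mpoly_eval p z + mpoly_eval q z"
proof -
  let ?S = "Poly_Mapping.keys p \<union> Poly_Mapping.keys q"
  have f: "finite ?S" by simp
  have "mpoly_eval (p + q) z = (\<Sum>m\<in>?S. Poly_Mapping.lookup (p+q) m * mon z m)"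
    by (rule eval_superset[OF f]) (simp add: keys_add)
  also have "\<dots> = (\<Sum>m\<in>?S. Poly_Mapping.lookup p m * mon z m) + (\<Sum>m\<in>?S. Poly_Mapping.lookup q m * mon z m)"
    by (simp add: lookup_add distrib_right sum.distrib)
  also have "\<dots> = mpoly_eval p z + mpoly_eval q z"
    using eval_superset[OF f, of p z] eval_superset[OF f, of q z] by simp
  finally show ?thesis .
qed

lemma eval_zero: "mpoly_eval 0 z = 0"
  by (simp add: mpoly_eval_def)

lemma eval_single: "mpoly_eval (Poly_Mapping.single m c) z = c * mon z m"
  by (subst eval_superset[of "{m}"]) auto

lemma eval_sum: "mpoly_eval (\<Sum>i\<in>I. p i) z = (\<Sum>i\<in>I. mpoly_eval (p i) z)"
  by (induction I rule: infinite_finite_induct) (auto simp: eval_zero eval_add)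

lemma eval_uminus: "mpoly_eval (- p) z = - mpoly_eval p z"
  by (metis add_eq_0_iff eval_add eval_zero neg_eq_iff_add_eq_0)

lemma eval_diff: "mpoly_eval (p - q) z = mpoly_eval p z - mpoly_eval q z"
  by (simp add: eval_add eval_uminus diff_conv_add_uminus del: add_uminus_conv_diff)

lemma poly_decomp: "p = (\<Sum>m\<in>Poly_Mapping.keys p. Poly_Mapping.single m (Poly_Mapping.lookup p m))"
  by (rule poly_mapping_eqI) (simp add: lookup_sum lookup_single when_def in_keys_iff)

lemma eval_mult: "mpoly_eval ((p::('a::field,'k::finite) mpoly) * q) z = mpoly_eval p z * mpoly_eval q z"
proof -
  have "p * q = (\<Sum>a\<in>Poly_Mapping.keys p. \<Sum>b\<in>Poly_Mapping.keys q.
      Poly_Mapping.single (a + b) (Poly_Mapping.lookup p a * Poly_Mapping.lookup q b))"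
    by (subst poly_decomp[of p], subst poly_decomp[of q])
       (simp add: sum_distrib_left sum_distrib_right mult_single sum.swap[of _ "Poly_Mapping.keys q"])
  then show ?thesis
    by (simp add: eval_sum eval_single mon_add sum_distrib_left sum_distrib_right
        mpoly_eval_def[of p] mpoly_eval_def[of q] mon_def[symmetric] mult_ac sum.swap[of _ "Poly_Mapping.keys q"])
qed

lemma mult_decomp: "(p::('a::field,'k::finite) mpoly) * q = (\<Sum>a\<in>Poly_Mapping.keys p. \<Sum>b\<in>Poly_Mapping.keys q.
      Poly_Mapping.single (a + b) (Poly_Mapping.lookup p a * Poly_Mapping.lookup q b))"
    by (subst poly_decomp[of p], subst poly_decomp[of q])
       (simp add: sum_distrib_left sum_distrib_right mult_single sum.swap[of _ "Poly_Mapping.keys q"])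

lemma mpoly_mult_nz:
  fixes p q :: "('a::field,'k::finite) mpoly"
  assumes p0: "p \<noteq> 0" and q0: "q \<noteq> 0"
  shows "p * q \<noteq> 0"
proof -
  obtain h :: "nat \<Rightarrow> 'k" where bij: "bij_betw h {0..<CARD('k)} UNIV"
    using ex_bij_betw_nat_finite[of "UNIV::'k set"] by auto
  define \<psi> :: "('k \<Rightarrow> nat) \<Rightarrow> (nat \<Rightarrow>\<^sub>0 nat)" where
    "\<psi> m = Abs_poly_mapping (\<lambda>j. if j < CARD('k) then m (h j) else 0)" for m
  have lk: "Poly_Mapping.lookup (\<psi> m) j = (if j < CARD('k) then m (h j) else 0)" for m j
  proof -
    have "finite {j. (if j < CARD('k) then m (h j) else 0) \<noteq> 0}"
      by (rule finite_subset[of _ "{..<CARD('k)}"]) auto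
    then show ?thesis unfolding \<psi>_def by (simp add: Abs_poly_mapping_inverse)
  qed
  have padd: "\<psi> (a + b) = \<psi> a + \<psi> b" for a b
    by (rule poly_mapping_eqI) (simp add: lk lookup_add)
  have pinj: "a = b" if "\<psi> a = \<psi> b" for a b
  proof
    fix i
    obtain j where "j < CARD('k)" "h j = i"
    proof -
      have "i \<in> h ` {0..<CARD('k)}" using bij unfolding bij_betw_def by simp
      then show ?thesis using that by auto
    qed
    then show "a i = b i" using arg_cong[OF that, of "\<lambda>x. Poly_Mapping.lookup x j"] by (simp add: lk)
  qed
  let ?F = "Poly_Mapping.keys p" and ?G = "Poly_Mapping.keys q"
  have Fne: "?F \<noteq> {}" and Gne: "?G \<noteq> {}" using p0 q0 by auto
  have "Max (\<psi> ` ?F) \<in> \<psi> ` ?F" using Fne by (intro Max_in) auto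
  then obtain a0 where a0: "a0 \<in> ?F" "\<psi> a0 = Max (\<psi> ` ?F)" by auto
  have amax: "\<psi> a \<le> \<psi> a0" if "a \<in> ?F" for a using that a0 by simp
  have "Max (\<psi> ` ?G) \<in> \<psi> ` ?G" using Gne by (intro Max_in) auto
  then obtain b0 where b0: "b0 \<in> ?G" "\<psi> b0 = Max (\<psi> ` ?G)" by auto
  have bmax: "\<psi> b \<le> \<psi> b0" if "b \<in> ?G" for b using that b0 by simp
  have uniq: "a = a0 \<and> b = b0" if "a \<in> ?F" "b \<in> ?G" "a0 + b0 = a + b" for a b
  proof -
    have e: "\<psi> a0 + \<psi> b0 = \<psi> a + \<psi> b" using that(3) by (metis padd)
    have "\<psi> a = \<psi> a0"
    proof (rule ccontr)
      assume "\<psi> a \<noteq> \<psi> a0"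
      then have "\<psi> a < \<psi> a0" using amax[OF that(1)] by simp
      then have "\<psi> a + \<psi> b < \<psi> a0 + \<psi> b0" using bmax[OF that(2)] by (rule add_less_le_mono)
      then show False using e by simp
    qed
    then have "a = a0" by (rule pinj)
    moreover have "b = b0" using that(3) \<open>a = a0\<close> by (auto simp: fun_eq_iff)
    ultimately show ?thesis by simp
  qed
  have "Poly_Mapping.lookup (p * q) (a0 + b0) =
     (\<Sum>a\<in>?F. if a = a0 then (\<Sum>b\<in>?G. if b = b0 then Poly_Mapping.lookup p a * Poly_Mapping.lookup q b else 0) else 0)"
    unfolding mult_decomp[of p q] lookup_sum lookup_single
  proof (intro sum.cong refl)
    fix a assume a: "a \<in> ?F"
    show "(\<Sum>b\<in>?G. Poly_Mapping.lookup p a * Poly_Mapping.lookup q b when a + b = a0 + b0) =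
      (if a = a0 then (\<Sum>b\<in>?G. if b = b0 then Poly_Mapping.lookup p a * Poly_Mapping.lookup q b else 0) else 0)"
      using uniq[OF a] by (auto simp: when_def intro!: sum.neutral sum.cong) (metis)
  qed
  also have "\<dots> = Poly_Mapping.lookup p a0 * Poly_Mapping.lookup q b0"
    using a0(1) b0(1) by (simp add: sum.delta')
  also have "\<dots> \<noteq> 0" using a0(1) b0(1) by (simp add: in_keys_iff)
  finally show ?thesis by auto
qed

definition delta :: "'k \<Rightarrow> ('k \<Rightarrow> nat)" where "delta j = (\<lambda>l. if l = j then 1 else 0)"

definition linp :: "int ^ 'k::finite \<Rightarrow> int \<Rightarrow> ('a::field, 'k) mpoly" where
  "linp w c = (\<Sum>j\<in>UNIV. Poly_Mapping.single (delta j) (of_int (w $ j))) - Poly_Mapping.single 0 (of_int c)"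

lemma mon_delta: "mon z (delta j) = of_int (z $ j)"
  by (simp add: mon_def delta_def if_distrib[of "\<lambda>n. x ^ n" for x] cong: if_cong)

lemma mon_0: "mon z 0 = 1"
  by (simp add: mon_def)

lemma eval_linp: "mpoly_eval (linp w c :: ('a::field,'k::finite) mpoly) z = of_int ((\<Sum>j\<in>UNIV. w $ j * z $ j) - c)"
  by (simp add: linp_def eval_diff eval_sum eval_single mon_delta mon_0 del: single_of_int)

lemma linp_nz:
  assumes "of_int (w $ i) \<noteq> (0::'a::field)"
  shows "(linp w c :: ('a,'k::finite) mpoly) \<noteq> 0"
proof
  assume "(linp w c :: ('a,'k) mpoly) = 0"
  then have "Poly_Mapping.lookup (linp w c :: ('a,'k) mpoly) (delta i) = 0" by simp
  moreover have "delta j = delta i \<longleftrightarrow> j = i" for j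
    by (auto simp: delta_def fun_eq_iff split: if_splits)
  moreover have "delta i \<noteq> 0" by (auto simp: delta_def fun_eq_iff)
  ultimately show False using assms
    by (simp add: linp_def lookup_minus lookup_sum lookup_single when_def del: single_of_int)
qed

lemma prod_nz:
  fixes P :: "'b \<Rightarrow> ('a::field,'k::finite) mpoly"
  shows "finite S \<Longrightarrow> (\<And>x. x \<in> S \<Longrightarrow> P x \<noteq> 0) \<Longrightarrow> prod P S \<noteq> 0"
  by (induction S rule: finite_induct) (auto simp: mpoly_mult_nz)

lemma eval_one: "mpoly_eval (1::('a::field,'k::finite) mpoly) z = 1"
  by (metis eval_single mon_0 mult_1 single_one)

lemma eval_prod: "mpoly_eval (\<Prod>x\<in>S. (P x::('a::field,'k::finite) mpoly)) z = (\<Prod>x\<in>S. mpoly_eval (P x) z)"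
  by (induction S rule: infinite_finite_induct) (auto simp: eval_one eval_mult)

definition dot :: "int ^ 'k::finite \<Rightarrow> int ^ 'k \<Rightarrow> int" where
  "dot v z = (\<Sum>j\<in>UNIV. v $ j * z $ j)"

lemma dot_shift: "dot v (z + axis i 1) = dot v z + v $ i"
  by (simp add: dot_def axis_def ring_distribs sum.distrib if_distrib[of "\<lambda>x. v $ _ * x"] cong: if_cong)

lemma dot_axis: "dot (axis i 1) z = z $ i"
  by (simp add: dot_def axis_def if_distrib[of "\<lambda>x. x * _"] cong: if_cong)

theorem mainTheorem16:
  fixes R :: "(int ^ 'k::finite) set" and f :: "int ^ 'k \<Rightarrow> 'a::field"
  assumes "polyhedral_region R"
    and "hypergeometric_on R f"
  shows "hypergeometric_on UNIV (\<lambda>z. if z \<in> R then f z else 0)"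
  unfolding hypergeometric_on_def
proof
  fix i :: 'k
  obtain A B :: "('a,'k) mpoly" where A0: "A \<noteq> 0" and B0: "B \<noteq> 0" and
    AB: "\<And>z. z \<in> R \<Longrightarrow> z + axis i 1 \<in> R \<Longrightarrow> mpoly_eval A z * f z = mpoly_eval B z * f (z + axis i 1)"
    using assms(2) unfolding hypergeometric_on_def by blast
  show "\<exists>A B :: ('a,'k) mpoly. A \<noteq> 0 \<and> B \<noteq> 0 \<and>
        (\<forall>z. z \<in> UNIV \<and> z + axis i 1 \<in> UNIV \<longrightarrow>
          mpoly_eval A z * (if z \<in> R then f z else 0) = mpoly_eval B z * (if z + axis i 1 \<in> R then f (z + axis i 1) else 0))"
  proof (cases "R = UNIV")
    case True
    then show ?thesis using A0 B0 AB by auto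
  next
    case False
    then obtain H where Hfin: "finite H" and RH: "R = (\<Inter>(v, n)\<in>H. half_space v n)"
      using assms(1) unfolding polyhedral_region_def by blast
    have memR: "z \<in> R \<longleftrightarrow> (\<forall>(v,n)\<in>H. n < dot v z)" for z
      by (auto simp: RH half_space_def dot_def)
    define T where "T = (\<lambda>(v::int^'k, n::int). if of_int (v $ i) \<noteq> (0::'a)
       then (\<lambda>c. (v, c)) ` {n - \<bar>v $ i\<bar>..n + \<bar>v $ i\<bar>}
       else (\<lambda>c. (axis i 1 :: int^'k, c)) ` {0..<\<bar>v $ i\<bar>})"
    define S where "S = (\<Union>x\<in>H. T x)"
    define Q :: "('a,'k) mpoly" where "Q = (\<Prod>x\<in>S. linp (fst x) (snd x))"
    have Sfin: "finite S" unfolding S_def T_def using Hfin by auto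
    have Snz: "of_int ((fst x) $ i) \<noteq> (0::'a)" if "x \<in> S" for x
      using that unfolding S_def T_def by (auto simp: axis_def split: if_splits)
    have Q0: "Q \<noteq> 0" unfolding Q_def
      by (rule prod_nz[OF Sfin]) (use Snz linp_nz in blast)
    have Qz: "mpoly_eval Q z = 0" if bad: "(z \<in> R) \<noteq> (z + axis i 1 \<in> R)" for z
    proof -
      obtain v n where vn: "(v,n) \<in> H" and d: "(n < dot v z) \<noteq> (n < dot v z + v $ i)"
      proof -
        have "\<exists>x\<in>H. (snd x < dot (fst x) z) \<noteq> (snd x < dot (fst x) z + (fst x) $ i)"
        proof (rule ccontr)
          assume "\<not> ?thesis"
          then have "\<forall>x\<in>H. (snd x < dot (fst x) z) = (snd x < dot (fst x) z + (fst x) $ i)" by blast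
          then have "(z \<in> R) = (z + axis i 1 \<in> R)" unfolding memR dot_shift by fastforce
          then show False using bad by simp
        qed
        then show ?thesis using that by force
      qed
      have rng: "dot v z \<in> {n - \<bar>v $ i\<bar>..n + \<bar>v $ i\<bar>}" and vi: "v $ i \<noteq> 0"
        using d by auto
      have "\<exists>x\<in>S. mpoly_eval (linp (fst x) (snd x) :: ('a,'k) mpoly) z = 0"
      proof (cases "of_int (v $ i) \<noteq> (0::'a)")
        case True
        then have "(v, dot v z) \<in> S" unfolding S_def T_def using vn rng by force
        then show ?thesis by (intro bexI[of _ "(v, dot v z)"]) (simp_all add: eval_linp dot_def)
      next
        case False
        let ?m = "\<bar>v $ i\<bar>"
        have mpos: "?m > 0" using vi by simp
        have "(axis i 1, z $ i mod ?m) \<in> S" unfolding S_def T_def using vn False mpos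
          by (force intro!: bexI[of _ "(v,n)"] imageI)
        moreover have "of_int (z $ i - z $ i mod ?m) = (0::'a)"
        proof -
          have "z $ i - z $ i mod ?m = ?m * (z $ i div ?m)" by (simp add: minus_mod_eq_mult_div)
          moreover have "of_int ?m = (0::'a)" using False by (simp add: abs_if)
          ultimately show ?thesis by simp
        qed
        ultimately show ?thesis
          by (intro bexI[of _ "(axis i 1, z $ i mod ?m)"]) (simp_all add: eval_linp dot_axis[unfolded dot_def])
      qed
      then show ?thesis unfolding Q_def eval_prod using Sfin by (simp add: prod_zero_iff)
    qed
    show ?thesis
    proof (rule exI[of _ "A * Q"], rule exI[of _ "B * Q"], intro conjI allI impI)
      show "A * Q \<noteq> 0" by (rule mpoly_mult_nz[OF A0 Q0])
    next
      show "B * Q \<noteq> 0" by (rule mpoly_mult_nz[OF B0 Q0])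
    next
      fix z :: "int^'k"
      show "mpoly_eval (A * Q) z * (if z \<in> R then f z else 0) =
        mpoly_eval (B * Q) z * (if z + axis i 1 \<in> R then f (z + axis i 1) else 0)"
      proof (cases "(z \<in> R) = (z + axis i 1 \<in> R)")
        case True
        then show ?thesis using AB[of z] by (auto simp: eval_mult mult_ac)
      next
        case False
        then show ?thesis using Qz[OF False] by (auto simp: eval_mult)
      qed
    qed
  qed
qed

end
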